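(* Let $\mathbb{A}$ be a non-empty set and $x\in\mathbb{A}^\omega$ a word that is not purely periodic (i.e. not of the form $u^\omega$ with $u\in\mathbb{A}^+$). Define $\varphi:\mathbb{A}^+\to\{0,1\}$ by $\varphi(u)=0$ if $u$ is a prefix of $x$ and $\varphi(u)=1$ otherwise. Then $x$ admits no $\varphi$-sequentially monochromatic factorization.
   Context: A factorization $x=V_0V_1V_2\cdots$ with all $V_i\in\mathbb{A}^+$ is $\varphi$-sequentially monochromatic if there is a color $c$ with $\varphi(V_iV_{i+1}\cdots V_{i+j})=c$ for all $i,j\ge0$. *)

theory Defs
  imports Main
begin

definition is_prefix_of :: "'a list \<Rightarrow> (nat \<Rightarrow> 'a) \<Rightarrow> bool" where
  "is_prefix_of u x \<longleftrightarrow> (\<forall>i<length u. u ! i = x i)"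

definition purely_periodic :: "(nat \<Rightarrow> 'a) \<Rightarrow> bool" where
  "purely_periodic x \<longleftrightarrow> (\<exists>u. u \<noteq> [] \<and> (\<forall>i. x i = u ! (i mod length u)))"

definition is_factorization :: "(nat \<Rightarrow> 'a) \<Rightarrow> (nat \<Rightarrow> 'a list) \<Rightarrow> bool" where
  "is_factorization x V \<longleftrightarrow> (\<forall>i. V i \<noteq> []) \<and>
     (\<forall>n. is_prefix_of (concat (map V [0..<n])) x)"

definition seq_monochromatic :: "('a list \<Rightarrow> 'c) \<Rightarrow> (nat \<Rightarrow> 'a list) \<Rightarrow> bool" where
  "seq_monochromatic \<phi> V \<longleftrightarrow>
     (\<exists>c. \<forall>i j. \<phi> (concat (map V [i..<i+j+1])) = c)"

end

theory Submission
  imports Defs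
begin

lemma len_concat_ge:
  assumes "\<forall>i. V i \<noteq> []"
  shows "length (concat (map V [a..<a+n])) \<ge> n"
proof (induction n)
  case 0 then show ?case by simp
next
  case (Suc n)
  have "length (V (a+n)) \<ge> 1" using assms by (simp add: Suc_le_eq)
  then show ?case using Suc by simp
qed

lemma per_mod:
  fixes i :: nat
  assumes "\<forall>k. x (p + k) = x k" "p > 0"
  shows "x i = x (i mod p)"
proof (induction i rule: less_induct)
  case (less i)
  show ?case
  proof (cases "i < p")
    case True then show ?thesis by simp
  next
    case False
    then have "x i = x (i - p)" using assms(1)[rule_format, of "i-p"] by simp
    also have "\<dots> = x ((i-p) mod p)" using less assms(2) False by simp
    also have "(i-p) mod p = i mod p" using False by (simp add: le_mod_geq not_less)
    finally show ?thesis .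
  qed
qed

theorem mainTheorem12:
  fixes x :: "nat \<Rightarrow> 'a"
  assumes "\<not> purely_periodic x"
  defines "\<phi> \<equiv> (\<lambda>u::'a list. if is_prefix_of u x then (0::nat) else 1)"
  shows "\<not> (\<exists>V. is_factorization x V \<and> seq_monochromatic \<phi> V)"
proof
  assume "\<exists>V. is_factorization x V \<and> seq_monochromatic \<phi> V"
  then obtain V c where ne: "\<forall>i. V i \<noteq> []"
    and pre: "\<forall>n. is_prefix_of (concat (map V [0..<n])) x"
    and mono: "\<forall>i j. \<phi> (concat (map V [i..<i+j+1])) = c"
    unfolding is_factorization_def seq_monochromatic_def by blast
  have "\<phi> (concat (map V [0..<0+0+1])) = 0"
    using pre[rule_format, of 1] unfolding \<phi>_def by simp
  then have c0: "c = 0" using mono by metis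
  define p where "p = length (V 0)"
  have pp: "p > 0" using ne p_def by simp
  have shift: "x (p + k) = x k" for k
  proof -
    define W where "W = concat (map V [1..<1+k+1])"
    have "\<phi> W = 0" using mono c0 W_def by metis
    then have wp: "is_prefix_of W x" unfolding \<phi>_def by (auto split: if_splits)
    have "1+k+1 = 1 + (k+1)" by simp
    then have lw: "length W \<ge> k+1" unfolding W_def using len_concat_ge[OF ne, where a=1 and n="k+1"] by metis
    have "[0..<k+2] = 0 # [1..<1+k+1]" by (simp add: upt_rec)
    then have "concat (map V [0..<k+2]) = V 0 @ W" unfolding W_def by simp
    then have vp: "is_prefix_of (V 0 @ W) x" using pre by metis
    have "x (p + k) = (V 0 @ W) ! (p + k)" using vp lw unfolding is_prefix_of_def p_def by (metis add_less_cancel_left length_append less_add_one order_less_le_trans)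
    also have "\<dots> = W ! k" unfolding p_def by (simp add: nth_append)
    also have "\<dots> = x k" using wp lw unfolding is_prefix_of_def by simp
    finally show ?thesis .
  qed
  have "\<forall>i. x i = V 0 ! (i mod length (V 0))"
  proof
    fix i
    have "x i = x (i mod p)" using per_mod[of x p i] shift pp by blast
    also have "\<dots> = V 0 ! (i mod p)"
      using pre[rule_format, of 1] pp unfolding is_prefix_of_def p_def by simp
    finally show "x i = V 0 ! (i mod length (V 0))" unfolding p_def .
  qed
  then have "purely_periodic x" unfolding purely_periodic_def using ne by blast
  then show False using assms(1) by simp
qed

end
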